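(* Assume $\operatorname{non}(\mathcal N)=\mathfrak c$. Then $\mathcal{ANM}_{\mathfrak c}\setminus\mathcal{ND}_{\mathfrak c}$ is $2^{\mathfrak c}$-coneable in $\left(\mathbb R^{[0,1]}\right)^{\mathfrak c}$.
   Context: For a regular infinite cardinal $\kappa$, a $\kappa$-sequence $(x_\alpha)_{\alpha<\kappa}$ converges to $x$ if for every neighbourhood $U$ of $x$ there is $\alpha_0<\kappa$ with $x_\alpha\in U$ for all $\alpha_0<\alpha<\kappa$; $\left(\mathbb R^{[0,1]}\right)^{\kappa}$ is the real vector space of $\kappa$-sequences of functions $[0,1]\to\mathbb R$ with indexwise operations. $\lambda$ is Lebesgue measure, $\mathcal N$ the null subsets of $[0,1]$, $\operatorname{non}(\mathcal N)$ the least cardinality of a non-null subset of $[0,1]$, $\mathfrak c=2^{\aleph_0}$. $\mathcal{ANM}_{\kappa}$: $\kappa$-sequences of Lebesgue measurable $f_\alpha:[0,1]\to\mathbb R$ converging a.e. to a measurable $f$ but not converging in measure to $f$ (for some $\varepsilon>0$, $\lambda(\{|f_\alpha-f|\ge\varepsilon\})\not\to0$). $\mathcal{ND}_{\kappa}$: $\kappa$-sequences of Lebesgue measurable $f_\alpha:[0,1]\to\mathbb R$ dominated a.e. by a common integrable $g$, converging a.e. to an integrable $f$, with $\int|f_\alpha-f|\,d\lambda\not\to0$. $S$ is positively (resp. negatively) $\mu$-coneable if there is a linearly independent $B\subset S$ of cardinality $\mu$ all of whose finite combinations with all coefficients $>0$ (resp. $<0$) lie in $S$; $\mu$-coneable means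 both. *)

theory Defs
  imports "HOL-Analysis.Analysis"
begin

text \<open>The index type of a continuum-sequence: a well-ordered type whose order type is the
  initial ordinal of cardinality continuum (cardinality of the reals), i.e. the type has
  cardinality continuum and every proper initial segment has cardinality below continuum.\<close>
definition continuum_order :: "'i::wellorder itself \<Rightarrow> bool" where
  "continuum_order _ \<longleftrightarrow>
     ordIso2 (card_of (UNIV :: 'i set)) (card_of (UNIV :: real set)) \<and>
     (\<forall>i::'i. ordLess2 (card_of {j. j < i}) (card_of (UNIV :: real set)))"

definition nonN_eq_c :: bool where
  "nonN_eq_c \<longleftrightarrow>
     (\<forall>A. A \<subseteq> {0..1::real} \<and> ordLess2 (card_of A) (card_of (UNIV :: real set))
          \<longrightarrow> A \<in> null_sets lebesgue)"

definition kconv :: "('i::linorder \<Rightarrow> 'b::topological_space) \<Rightarrow> 'b \<Rightarrow> bool" where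
  "kconv x l \<longleftrightarrow> (\<forall>U. open U \<and> l \<in> U \<longrightarrow> (\<exists>\<alpha>0. \<forall>\<alpha>. \<alpha>0 < \<alpha> \<longrightarrow> x \<alpha> \<in> U))"

text \<open>Functions [0,1] -> R are represented as functions R -> R vanishing off [0,1].\<close>
definition on_unit :: "(real \<Rightarrow> real) \<Rightarrow> bool" where
  "on_unit h \<longleftrightarrow> (\<forall>x. x \<notin> {0..1} \<longrightarrow> h x = 0)"

abbreviation LU :: "real measure" where
  "LU \<equiv> lebesgue_on {0..1}"

definition ANM :: "('i::linorder \<Rightarrow> real \<Rightarrow> real) set" where
  "ANM = {F. (\<forall>\<alpha>. on_unit (F \<alpha>) \<and> F \<alpha> \<in> borel_measurable LU) \<and>
     (\<exists>f \<in> borel_measurable LU.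
        (AE x in LU. kconv (\<lambda>\<alpha>. F \<alpha> x) (f x)) \<and>
        (\<exists>\<epsilon>>0. \<not> kconv (\<lambda>\<alpha>. measure LU {x \<in> {0..1}. \<epsilon> \<le> \<bar>F \<alpha> x - f x\<bar>}) 0))}"

definition ND :: "('i::linorder \<Rightarrow> real \<Rightarrow> real) set" where
  "ND = {F. (\<forall>\<alpha>. on_unit (F \<alpha>) \<and> F \<alpha> \<in> borel_measurable LU) \<and>
     (\<exists>g. integrable LU g \<and> (\<forall>\<alpha>. AE x in LU. \<bar>F \<alpha> x\<bar> \<le> g x)) \<and>
     (\<exists>f. integrable LU f \<and>
        (AE x in LU. kconv (\<lambda>\<alpha>. F \<alpha> x) (f x)) \<and>
        \<not> kconv (\<lambda>\<alpha>. integral\<^sup>L LU (\<lambda>x. \<bar>F \<alpha> x - f x\<bar>)) 0)}"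

definition lin_indep :: "('i \<Rightarrow> real \<Rightarrow> real) set \<Rightarrow> bool" where
  "lin_indep B \<longleftrightarrow>
     (\<forall>A c. finite A \<and> A \<subseteq> B \<and> (\<forall>\<alpha> x. (\<Sum>b\<in>A. c b * b \<alpha> x) = 0) \<longrightarrow> (\<forall>b\<in>A. c b = 0))"

definition pos_coneable :: "'k set \<Rightarrow> ('i \<Rightarrow> real \<Rightarrow> real) set \<Rightarrow> bool" where
  "pos_coneable K S \<longleftrightarrow> (\<exists>B. B \<subseteq> S \<and> lin_indep B \<and> ordIso2 (card_of B) (card_of K) \<and>
     (\<forall>A c. finite A \<and> A \<noteq> {} \<and> A \<subseteq> B \<and> (\<forall>b\<in>A. c b > (0::real))
        \<longrightarrow> (\<lambda>\<alpha> x. \<Sum>b\<in>A. c b * b \<alpha> x) \<in> S))"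

definition neg_coneable :: "'k set \<Rightarrow> ('i \<Rightarrow> real \<Rightarrow> real) set \<Rightarrow> bool" where
  "neg_coneable K S \<longleftrightarrow> (\<exists>B. B \<subseteq> S \<and> lin_indep B \<and> ordIso2 (card_of B) (card_of K) \<and>
     (\<forall>A c. finite A \<and> A \<noteq> {} \<and> A \<subseteq> B \<and> (\<forall>b\<in>A. c b < (0::real))
        \<longrightarrow> (\<lambda>\<alpha> x. \<Sum>b\<in>A. c b * b \<alpha> x) \<in> S))"

definition coneable :: "'k set \<Rightarrow> ('i \<Rightarrow> real \<Rightarrow> real) set \<Rightarrow> bool" where
  "coneable K S \<longleftrightarrow> pos_coneable K S \<and> neg_coneable K S"

end

theory Submission imports Defs "HOL-Algebra.Free_Abelian_Groups" begin

lemma comb_indep: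
  fixes \<sigma> :: "'a \<Rightarrow> 'b set" and d :: "'a \<Rightarrow> real"
  assumes "finite A" "inj_on \<sigma> A"
    "\<And>G. finite G \<Longrightarrow> (\<Sum>a\<in>A. d a * (if G \<subseteq> \<sigma> a then 1 else 0)) = 0"
  shows "\<forall>a\<in>A. d a = 0"
  using assms
proof (induction "card A" arbitrary: A rule: less_induct)
  case less
  show ?case
  proof (cases "A = {}")
    case True then show ?thesis by simp
  next
    case False
    have "finite (\<sigma> ` A)" "\<sigma> ` A \<noteq> {}" using less False by auto
    from finite_has_maximal[OF this] obtain a1 where a1: "a1 \<in> A"
      and mx: "\<forall>b\<in>\<sigma> ` A. \<sigma> a1 \<le> b \<longrightarrow> \<sigma> a1 = b" by blast
    have nsub: "\<not> \<sigma> a1 \<subseteq> \<sigma> a" if "a \<in> A - {a1}" for a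
    proof
      assume "\<sigma> a1 \<subseteq> \<sigma> a"
      then have "\<sigma> a1 = \<sigma> a" using mx that by auto
      then show False using less(3) a1 that by (auto dest: inj_onD)
    qed
    define x where "x a = (SOME y. y \<in> \<sigma> a1 \<and> y \<notin> \<sigma> a)" for a
    have x: "x a \<in> \<sigma> a1 \<and> x a \<notin> \<sigma> a" if "a \<in> A - {a1}" for a
      using nsub[OF that] unfolding x_def by (metis (no_types, lifting) someI_ex subsetI)
    define G where "G = x ` (A - {a1})"
    have fG: "finite G" using less(2) G_def by simp
    have G1: "G \<subseteq> \<sigma> a1" using x G_def by auto
    have G2: "\<not> G \<subseteq> \<sigma> a" if "a \<in> A - {a1}" for a using x[OF that] that G_def by auto
    have "0 = (\<Sum>a\<in>A. d a * (if G \<subseteq> \<sigma> a then 1 else 0))" using less(4)[OF fG] by simp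
    also have "\<dots> = d a1 + (\<Sum>a\<in>A-{a1}. d a * (if G \<subseteq> \<sigma> a then 1 else 0))"
      by (simp add: sum.remove[OF less(2) a1] G1)
    also have "(\<Sum>a\<in>A-{a1}. d a * (if G \<subseteq> \<sigma> a then 1 else 0)) = 0"
      using G2 by (intro sum.neutral) auto
    finally have d1: "d a1 = 0" by simp
    have "\<forall>a\<in>A-{a1}. d a = 0"
    proof (rule less(1))
      show "card (A - {a1}) < card A" using less(2) a1 by (rule card_Diff1_less)
      show "finite (A - {a1})" using less(2) by simp
      show "inj_on \<sigma> (A - {a1})" using less(3) by (rule inj_on_subset) auto
      fix H :: "'b set" assume "finite H"
      have "0 = (\<Sum>a\<in>A. d a * (if H \<subseteq> \<sigma> a then 1 else 0))" using less(4)[OF \<open>finite H\<close>] by simp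
      also have "\<dots> = d a1 * (if H \<subseteq> \<sigma> a1 then 1 else 0) + (\<Sum>a\<in>A-{a1}. d a * (if H \<subseteq> \<sigma> a then 1 else 0))"
        by (simp add: sum.remove[OF less(2) a1])
      finally show "(\<Sum>a\<in>A-{a1}. d a * (if H \<subseteq> \<sigma> a then 1 else 0)) = 0" using d1 by simp
    qed
    then show ?thesis using d1 by auto
  qed
qed

locale cset =
  fixes E :: "'i::wellorder \<Rightarrow> real set" and u :: "'i \<Rightarrow> real"
  assumes E_null: "\<And>\<alpha>. E \<alpha> \<in> null_sets lebesgue"
    and E_cover: "\<And>x. x \<in> {0..1} \<Longrightarrow> \<exists>\<beta>. \<forall>\<alpha>>\<beta>. x \<in> E \<alpha>"
    and nomax: "\<And>\<alpha>0::'i. \<exists>\<alpha>. \<alpha>0 < \<alpha>"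
    and u_ge: "\<And>\<alpha>. u \<alpha> \<ge> 1"
    and u_unb: "\<And>M. \<exists>\<alpha>. u \<alpha> \<ge> M"
begin

definition D :: "'i \<Rightarrow> real set" where "D \<alpha> = {0..1} - E \<alpha>"
definition chi :: "'i \<Rightarrow> real \<Rightarrow> real" where "chi \<alpha> x = indicator (D \<alpha>) x"

lemma D_sets_leb: "D \<alpha> \<in> sets lebesgue"
  unfolding D_def using E_null[of \<alpha>] by (intro sets.Diff) (auto dest: null_setsD2)

lemma D_sets: "D \<alpha> \<in> sets LU"
  using D_sets_leb by (simp add: sets_restrict_space_iff D_def)

lemma D_measure: "measure LU (D \<alpha>) = 1"
proof -
  have "measure LU (D \<alpha>) = measure lebesgue (D \<alpha>)"
    by (rule measure_restrict_space) (auto simp: D_def)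
  also have "\<dots> = measure lebesgue {0..1::real}"
    unfolding D_def by (rule measure_Diff_null_set) (auto simp: E_null)
  finally show ?thesis by simp
qed

lemma D_emeasure: "emeasure LU (D \<alpha>) < \<infinity>"
proof -
  have "emeasure LU (D \<alpha>) = emeasure lebesgue (D \<alpha>)"
    by (rule emeasure_restrict_space) (auto simp: D_def)
  also have "\<dots> \<le> emeasure lebesgue {0..1::real}"
    by (rule emeasure_mono) (auto simp: D_def)
  finally show ?thesis by (simp add: order_le_less_trans)
qed

lemma D_ne: "\<exists>x. x \<in> D \<alpha>"
  using D_measure[of \<alpha>] by (metis equals0I measure_empty zero_neq_one)

lemma core:
  fixes \<psi> :: "'i \<Rightarrow> real" and \<epsilon> :: real
  assumes eps: "\<epsilon> > 0" and bnd: "\<And>\<alpha>. \<epsilon> * u \<alpha> \<le> \<bar>\<psi> \<alpha>\<bar>"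
  shows "(\<lambda>\<alpha> x. \<psi> \<alpha> * chi \<alpha> x) \<in> ANM - ND"
proof -
  define H where "H = (\<lambda>\<alpha> x. \<psi> \<alpha> * chi \<alpha> x)"
  have meas: "H \<alpha> \<in> borel_measurable LU" for \<alpha>
    unfolding H_def chi_def using D_sets by measurable
  have onu: "on_unit (H \<alpha>)" for \<alpha>
    by (auto simp: on_unit_def H_def chi_def D_def)
  have conv: "kconv (\<lambda>\<alpha>. H \<alpha> x) 0" for x
  proof (cases "x \<in> {0..1}")
    case True
    then obtain \<beta> where b: "\<forall>\<alpha>>\<beta>. x \<in> E \<alpha>" using E_cover by blast
    show ?thesis unfolding kconv_def
    proof (intro allI impI)
      fix U :: "real set" assume "open U \<and> 0 \<in> U"
      then show "\<exists>\<alpha>0. \<forall>\<alpha>. \<alpha>0 < \<alpha> \<longrightarrow> H \<alpha> x \<in> U"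
        using b by (auto simp: H_def chi_def D_def intro!: exI[of _ \<beta>])
    qed
  next
    case False
    then show ?thesis by (auto simp: kconv_def H_def chi_def D_def)
  qed
  have ge: "\<epsilon> \<le> \<bar>\<psi> \<alpha>\<bar>" for \<alpha>
    using bnd[of \<alpha>] u_ge[of \<alpha>] eps by (smt (verit) mult_le_cancel_left1)
  have setD: "{x \<in> {0..1}. \<epsilon> \<le> \<bar>H \<alpha> x - 0\<bar>} = D \<alpha>" for \<alpha>
    using ge[of \<alpha>] eps by (auto simp: H_def chi_def D_def)
  have nk: "\<not> kconv (\<lambda>\<alpha>. measure LU {x \<in> {0..1}. \<epsilon> \<le> \<bar>H \<alpha> x - 0\<bar>}) 0"
  proof
    assume "kconv (\<lambda>\<alpha>. measure LU {x \<in> {0..1}. \<epsilon> \<le> \<bar>H \<alpha> x - 0\<bar>}) 0"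
    then have "kconv (\<lambda>\<alpha>::'i. 1::real) 0" by (simp only: setD D_measure)
    moreover have "open {..<1/2::real} \<and> (0::real) \<in> {..<1/2}" by auto
    ultimately obtain \<alpha>0 :: 'i where "\<forall>\<alpha>. \<alpha>0 < \<alpha> \<longrightarrow> (1::real) \<in> {..<1/2}"
      unfolding kconv_def by blast
    then show False using nomax[of \<alpha>0] by auto
  qed
  have inANM: "H \<in> ANM"
  proof -
    have "(AE x in LU. kconv (\<lambda>\<alpha>. H \<alpha> x) ((\<lambda>x. 0::real) x)) \<and>
      (\<exists>\<epsilon>>0. \<not> kconv (\<lambda>\<alpha>. measure LU {x \<in> {0..1}. \<epsilon> \<le> \<bar>H \<alpha> x - (\<lambda>x. 0::real) x\<bar>}) 0)"
      using conv nk eps by (intro conjI AE_I2 exI[of _ \<epsilon>]) simp_all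
    moreover have "(\<lambda>x. 0::real) \<in> borel_measurable LU" by simp
    ultimately have "\<exists>f\<in>borel_measurable LU. (AE x in LU. kconv (\<lambda>\<alpha>. H \<alpha> x) (f x)) \<and>
        (\<exists>\<epsilon>>0. \<not> kconv (\<lambda>\<alpha>. measure LU {x \<in> {0..1}. \<epsilon> \<le> \<bar>H \<alpha> x - f x\<bar>}) 0)"
      by - (rule bexI[where x="\<lambda>x. 0::real"], simp_all)
    moreover have "\<forall>\<alpha>. on_unit (H \<alpha>) \<and> H \<alpha> \<in> borel_measurable LU" using meas onu by blast
    ultimately show ?thesis unfolding ANM_def by (intro CollectI conjI)
  qed
  have notND: "H \<notin> ND"
  proof
    assume "H \<in> ND"
    then obtain g where gi: "integrable LU g" and dom: "\<And>\<alpha>. AE x in LU. \<bar>H \<alpha> x\<bar> \<le> g x"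
      unfolding ND_def by blast
    obtain \<alpha> where ua: "u \<alpha> \<ge> (integral\<^sup>L LU g + 1) / \<epsilon>" using u_unb by blast
    have big: "\<bar>\<psi> \<alpha>\<bar> \<ge> integral\<^sup>L LU g + 1"
    proof -
      have "integral\<^sup>L LU g + 1 \<le> \<epsilon> * u \<alpha>" using ua eps by (simp add: field_simps)
      then show ?thesis using bnd[of \<alpha>] by linarith
    qed
    have int1: "integrable LU (\<lambda>x. \<bar>\<psi> \<alpha>\<bar> * chi \<alpha> x)"
      unfolding chi_def by (intro integrable_mult_right integrable_real_indicator D_sets D_emeasure)
    have "AE x in LU. \<bar>\<psi> \<alpha>\<bar> * chi \<alpha> x \<le> g x"
      using dom[of \<alpha>] by eventually_elim (auto simp: H_def chi_def abs_mult)
    then have "integral\<^sup>L LU (\<lambda>x. \<bar>\<psi> \<alpha>\<bar> * chi \<alpha> x) \<le> integral\<^sup>L LU g"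
      using int1 gi by (rule integral_mono_AE[rotated 2])
    moreover have "integral\<^sup>L LU (\<lambda>x. \<bar>\<psi> \<alpha>\<bar> * chi \<alpha> x) = \<bar>\<psi> \<alpha>\<bar>"
    proof -
      have "integral\<^sup>L LU (indicator (D \<alpha>) :: real \<Rightarrow> real) = measure LU (D \<alpha>)"
        by (rule has_bochner_integral_integral_eq[OF has_bochner_integral_real_indicator[OF D_sets D_emeasure]])
      then show ?thesis unfolding chi_def using D_measure by (simp add: integral_mult_right_zero)
    qed
    ultimately show False using big by linarith
  qed
  show ?thesis using inANM notND H_def by simp
qed

end


theorem mainTheorem9:
  assumes "continuum_order TYPE('i::wellorder)"
    and "nonN_eq_c"
  shows "coneable (Pow (UNIV :: real set)) (ANM - ND :: ('i \<Rightarrow> real \<Rightarrow> real) set)"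
proof -
  have ci: "ordIso2 (card_of (UNIV :: 'i set)) (card_of (UNIV :: real set))"
    and seg: "\<And>i::'i. ordLess2 (card_of {j. j < i}) (card_of (UNIV :: real set))"
    using assms(1) unfolding continuum_order_def by auto
  obtain b :: "'i \<Rightarrow> real" where bb: "bij b" using ci card_of_ordIso by blast
  have infr: "infinite (UNIV :: real set)" by (rule infinite_UNIV_char_0)
  have infi: "infinite (UNIV :: 'i set)" using card_of_ordIso_finite[OF ci] infr by simp
  have "ordIso2 (card_of (UNIV :: real set)) (card_of (lists (UNIV :: real set)))"
    using card_of_lists_infinite[OF infr] by (rule ordIso_symmetric)
  then obtain s :: "real \<Rightarrow> real list" where sb: "bij s"
    using card_of_ordIso lists_UNIV by metis
  have nomax: "\<exists>\<alpha>. \<alpha>0 < \<alpha>" for \<alpha>0 :: 'i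
  proof (rule ccontr)
    assume "\<not> (\<exists>\<alpha>. \<alpha>0 < \<alpha>)"
    then have "{j. j < \<alpha>0} = UNIV - {\<alpha>0}" using not_less_iff_gr_or_eq by auto
    then have "ordIso2 (card_of {j. j < \<alpha>0}) (card_of (UNIV :: real set))"
      using card_of_infinite_diff_finite[OF infi, of "{\<alpha>0}"] ci by (auto intro: ordIso_transitive)
    then have "ordLess2 (card_of (UNIV :: real set)) (card_of (UNIV :: real set))"
      using seg[of \<alpha>0] by (metis ordIso_ordLess_trans ordIso_symmetric)
    then show False using ordLess_irreflexive by blast
  qed
  define e where "e \<alpha> = max 0 (min 1 (b \<alpha>))" for \<alpha>
  define L where "L \<alpha> = s (b \<alpha>)" for \<alpha>
  define E where "E \<alpha> = e ` {\<beta>. \<beta> < \<alpha>}" for \<alpha>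
  define u where "u \<alpha> = 1 + real (length (L \<alpha>))" for \<alpha>
  have Lsurj: "\<exists>\<alpha>. L \<alpha> = l" for l
  proof -
    obtain r where "s r = l" using sb by (metis bij_pointE)
    moreover obtain \<alpha> where "b \<alpha> = r" using bb by (metis bij_pointE)
    ultimately show ?thesis unfolding L_def by blast
  qed
  interpret cset E u
  proof
    fix \<alpha> :: 'i
    have "E \<alpha> \<subseteq> {0..1}" unfolding E_def e_def by auto
    moreover have "ordLess2 (card_of (E \<alpha>)) (card_of (UNIV :: real set))"
      unfolding E_def using card_of_image seg ordLeq_ordLess_trans by blast
    ultimately show "E \<alpha> \<in> null_sets lebesgue" using assms(2) unfolding nonN_eq_c_def by blast
  next
    fix x :: real assume x: "x \<in> {0..1}"
    obtain \<beta> where "b \<beta> = x" using bb by (metis bij_pointE)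
    then have "e \<beta> = x" using x unfolding e_def by auto
    then show "\<exists>\<beta>. \<forall>\<alpha>>\<beta>. x \<in> E \<alpha>" unfolding E_def by blast
  next
    show "\<exists>\<alpha>. \<alpha>0 < \<alpha>" for \<alpha>0 :: 'i by (rule nomax)
  next
    show "1 \<le> u \<alpha>" for \<alpha> unfolding u_def by simp
  next
    fix M :: real
    obtain n :: nat where "M \<le> real n" using real_arch_simple by blast
    moreover obtain \<alpha> where "L \<alpha> = replicate n 0" using Lsurj by blast
    ultimately show "\<exists>\<alpha>. M \<le> u \<alpha>" unfolding u_def by (intro exI[of _ \<alpha>]) simp
  qed
  have upos: "u \<alpha> > 0" for \<alpha> using u_ge[of \<alpha>] by simp
  define F where "F S = (\<lambda>\<alpha> x. (u \<alpha> * (1 + (if set (L \<alpha>) \<subseteq> S then 1 else 0))) * chi \<alpha> x)"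
    for S :: "real set"
  define B where "B = range F"
  define \<sigma> where "\<sigma> = inv_into UNIV F"
  define k where "k b \<alpha> = (1 + (if set (L \<alpha>) \<subseteq> \<sigma> b then 1 else 0::real))" for b \<alpha>
  have Fs: "b = F (\<sigma> b)" if "b \<in> B" for b
    using that unfolding B_def \<sigma>_def by (simp add: f_inv_into_f)
  have k12: "1 \<le> k b \<alpha>" "k b \<alpha> \<le> 2" for b \<alpha> unfolding k_def by auto
  have combo: "(\<lambda>\<alpha> x. \<Sum>b\<in>A. c b * b \<alpha> x) = (\<lambda>\<alpha> x. (u \<alpha> * (\<Sum>b\<in>A. c b * k b \<alpha>)) * chi \<alpha> x)"
    if "A \<subseteq> B" for A c
  proof (intro ext)
    fix \<alpha> x
    have "(\<Sum>b\<in>A. c b * b \<alpha> x) = (\<Sum>b\<in>A. c b * (u \<alpha> * k b \<alpha> * chi \<alpha> x))"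
    proof (rule sum.cong)
      fix b assume "b \<in> A"
      then have eqb: "b = F (\<sigma> b)" using that Fs by blast
      have "b \<alpha> x = F (\<sigma> b) \<alpha> x" by (rule fun_cong[OF fun_cong[OF eqb]])
      also have "F (\<sigma> b) \<alpha> x = u \<alpha> * k b \<alpha> * chi \<alpha> x" unfolding k_def F_def by simp
      finally have "b \<alpha> x = u \<alpha> * k b \<alpha> * chi \<alpha> x" .
      then show "c b * b \<alpha> x = c b * (u \<alpha> * k b \<alpha> * chi \<alpha> x)" by simp
    qed simp
    also have "\<dots> = (u \<alpha> * (\<Sum>b\<in>A. c b * k b \<alpha>)) * chi \<alpha> x"
      by (simp add: sum_distrib_left sum_distrib_right algebra_simps)
    finally show "(\<Sum>b\<in>A. c b * b \<alpha> x) = (u \<alpha> * (\<Sum>b\<in>A. c b * k b \<alpha>)) * chi \<alpha> x" .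
  qed
  have pos: "(\<lambda>\<alpha> x. \<Sum>b\<in>A. c b * b \<alpha> x) \<in> ANM - ND"
    if A: "finite A" "A \<noteq> {}" "A \<subseteq> B" "\<forall>b\<in>A. c b > (0::real)" for A c
  proof -
    define \<epsilon> where "\<epsilon> = (\<Sum>b\<in>A. c b)"
    have eps: "\<epsilon> > 0" unfolding \<epsilon>_def using A by (intro sum_pos) auto
    have "\<epsilon> * u \<alpha> \<le> \<bar>u \<alpha> * (\<Sum>b\<in>A. c b * k b \<alpha>)\<bar>" for \<alpha>
    proof -
      have "\<epsilon> \<le> (\<Sum>b\<in>A. c b * k b \<alpha>)" unfolding \<epsilon>_def
        using A k12 by (intro sum_mono) (simp add: less_imp_le)
      then show ?thesis using upos[of \<alpha>] eps by (simp add: abs_mult mult_right_mono mult.commute)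
    qed
    from core[OF eps this] show ?thesis using combo[OF A(3)] by simp
  qed
  have neg: "(\<lambda>\<alpha> x. \<Sum>b\<in>A. c b * b \<alpha> x) \<in> ANM - ND"
    if A: "finite A" "A \<noteq> {}" "A \<subseteq> B" "\<forall>b\<in>A. c b < (0::real)" for A c
  proof -
    define \<epsilon> where "\<epsilon> = (\<Sum>b\<in>A. - c b)"
    have eps: "\<epsilon> > 0" unfolding \<epsilon>_def using A by (intro sum_pos) auto
    have "\<epsilon> * u \<alpha> \<le> \<bar>u \<alpha> * (\<Sum>b\<in>A. c b * k b \<alpha>)\<bar>" for \<alpha>
    proof -
      have "\<epsilon> \<le> (\<Sum>b\<in>A. - (c b * k b \<alpha>))" unfolding \<epsilon>_def
        using A k12 by (intro sum_mono) (simp add: less_imp_le)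
      then have "\<epsilon> \<le> - (\<Sum>b\<in>A. c b * k b \<alpha>)" by (simp add: sum_negf)
      then have "\<epsilon> * u \<alpha> \<le> (- (\<Sum>b\<in>A. c b * k b \<alpha>)) * u \<alpha>"
        using upos[of \<alpha>] by (intro mult_right_mono) auto
      also have "\<dots> \<le> \<bar>(\<Sum>b\<in>A. c b * k b \<alpha>)\<bar> * u \<alpha>"
        using upos[of \<alpha>] by (intro mult_right_mono) auto
      also have "\<dots> = \<bar>u \<alpha> * (\<Sum>b\<in>A. c b * k b \<alpha>)\<bar>"
        using upos[of \<alpha>] by (simp add: abs_mult)
      finally show ?thesis .
    qed
    from core[OF eps this] show ?thesis using combo[OF A(3)] by simp
  qed
  have BS: "B \<subseteq> ANM - ND"
  proof
    fix b assume "b \<in> B"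
    then have "(\<lambda>\<alpha> x. \<Sum>b'\<in>{b}. (\<lambda>_. 1::real) b' * b' \<alpha> x) \<in> ANM - ND"
      by (intro pos) auto
    then show "b \<in> ANM - ND" by simp
  qed
  have injF: "inj F"
  proof
    fix S T :: "real set" assume eq: "F S = F T"
    show "S = T"
    proof (rule Set.set_eqI)
      fix y
      obtain \<alpha> where La: "L \<alpha> = [y]" using Lsurj by blast
      obtain x where x: "x \<in> D \<alpha>" using D_ne by blast
      have "F S \<alpha> x = F T \<alpha> x" using eq by simp
      then have "u \<alpha> * (1 + (if y \<in> S then 1 else 0)) = u \<alpha> * (1 + (if y \<in> T then 1 else 0::real))"
        using x La by (simp add: F_def chi_def)
      then show "y \<in> S \<longleftrightarrow> y \<in> T" using upos[of \<alpha>] by (auto split: if_splits)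
    qed
  qed
  have card: "ordIso2 (card_of B) (card_of (Pow (UNIV :: real set)))"
  proof -
    have "bij_betw F (Pow (UNIV :: real set)) B" unfolding B_def using injF
      by (simp add: bij_betw_def)
    then have "ordIso2 (card_of (Pow (UNIV :: real set))) (card_of B)" using card_of_ordIso by blast
    then show ?thesis by (rule ordIso_symmetric)
  qed
  have li: "lin_indep B"
    unfolding lin_indep_def
  proof (intro allI impI)
    fix A c assume H: "finite A \<and> A \<subseteq> B \<and> (\<forall>\<alpha> x. (\<Sum>b\<in>A. c b * b \<alpha> x) = 0)"
    then have fA: "finite A" and AB: "A \<subseteq> B" by auto
    have z: "(\<Sum>b\<in>A. c b * k b \<alpha>) = 0" for \<alpha>
    proof -
      obtain x where x: "x \<in> D \<alpha>" using D_ne by blast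
      have "(\<Sum>b\<in>A. c b * b \<alpha> x) = 0" using H by blast
      then have "(u \<alpha> * (\<Sum>b\<in>A. c b * k b \<alpha>)) * chi \<alpha> x = 0"
        using fun_cong[OF fun_cong[OF combo[OF AB, of c]], of \<alpha> x] by simp
      then show ?thesis using x upos[of \<alpha>] by (simp add: chi_def)
    qed
    have zl: "(\<Sum>b\<in>A. c b * (1 + (if set l \<subseteq> \<sigma> b then 1 else 0))) = 0" for l
    proof -
      obtain \<alpha> where "L \<alpha> = l" using Lsurj by blast
      then show ?thesis using z[of \<alpha>] unfolding k_def by simp
    qed
    have s0: "(\<Sum>b\<in>A. c b) = 0" using zl[of "[]"] by (simp add: sum_distrib_right[symmetric])
    have zG: "(\<Sum>b\<in>A. c b * (if G \<subseteq> \<sigma> b then 1 else 0)) = 0" if fG: "finite G" for G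
    proof -
      obtain l where l: "set l = G" using finite_list[OF fG] by blast
      have "(\<Sum>b\<in>A. c b * (1 + (if set l \<subseteq> \<sigma> b then 1 else 0))) =
        (\<Sum>b\<in>A. c b) + (\<Sum>b\<in>A. c b * (if set l \<subseteq> \<sigma> b then 1 else 0))"
        by (simp add: distrib_left sum.distrib)
      then show ?thesis using zl[of l] s0 l by simp
    qed
    have "inj_on \<sigma> A" unfolding \<sigma>_def using AB unfolding B_def by (rule inj_on_inv_into)
    from comb_indep[OF fA this zG] show "\<forall>b\<in>A. c b = 0" .
  qed
  show ?thesis unfolding coneable_def pos_coneable_def neg_coneable_def
  proof (intro conjI exI[of _ B])
    show "\<forall>A c. finite A \<and> A \<noteq> {} \<and> A \<subseteq> B \<and> (\<forall>b\<in>A. c b > (0::real))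
        \<longrightarrow> (\<lambda>\<alpha> x. \<Sum>b\<in>A. c b * b \<alpha> x) \<in> ANM - ND" using pos by blast
    show "\<forall>A c. finite A \<and> A \<noteq> {} \<and> A \<subseteq> B \<and> (\<forall>b\<in>A. c b < (0::real))
        \<longrightarrow> (\<lambda>\<alpha> x. \<Sum>b\<in>A. c b * b \<alpha> x) \<in> ANM - ND" using neg by blast
  qed (use BS li card in auto)
qed

end
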